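(* Let $(W_t)$ be a one-dimensional Brownian motion, $0<h_{\min}\le h_{\max}<\infty$ and $t_0>0$. Let $c>0$ and $\nu\in\mathcal{M}_1((-1,1))$ be such that, with $t':=\frac{t_0}{h_{\max}^2}\wedge t_0$, $$\mathbb{P}_{0,x}[W_{t'}\in\cdot\mid\tau_1>t']\ge c\,\nu\quad\text{for all }x\in(-1,1).$$ Then for every $z\in[h_{\min},h_{\max}]$, $$\mathbb{P}_{0,x}[W_u\in\cdot\mid\tau_z>u]\ge c\,\nu_z\quad\text{for all }x\in(-z,z),\ u\ge t_0,$$ where $\nu_z$ is the probability measure defined by $\nu_z(f)=\int_{(-1,1)}f(zx)\,\nu(dx)$.
   Context: $\mathbb{P}_{0,x}$ is the law of Brownian motion started at $x$; for $z>0$, $\tau_z:=\inf\{t\ge0:|W_t|=z\}$. Measure inequalities $\mu\ge c\nu$ are setwise. *)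

theory Defs
  imports "HOL-Probability.Probability"
begin

definition brownian_motion_from ::
  "'a measure \<Rightarrow> (real \<Rightarrow> 'a \<Rightarrow> real) \<Rightarrow> real \<Rightarrow> bool" where
  "brownian_motion_from M W x \<longleftrightarrow>
     prob_space M \<and>
     (\<forall>t\<ge>0. W t \<in> borel_measurable M) \<and>
     (\<forall>\<omega>\<in>space M. W 0 \<omega> = x) \<and>
     (\<forall>\<omega>\<in>space M. continuous_on {0..} (\<lambda>t. W t \<omega>)) \<and>
     (\<forall>s t. 0 \<le> s \<and> s < t \<longrightarrow>
        distributed M lborel (\<lambda>\<omega>. W t \<omega> - W s \<omega>) (\<lambda>y. ennreal (normal_density 0 (sqrt (t - s)) y))) \<and>
     (\<forall>(ts :: nat \<Rightarrow> real) n. 0 \<le> ts 0 \<and> (\<forall>i<n. ts i < ts (Suc i)) \<longrightarrow>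
        prob_space.indep_vars M (\<lambda>_. borel) (\<lambda>i \<omega>. W (ts (Suc i)) \<omega> - W (ts i) \<omega>) {..<n})"

definition exit_time :: "real \<Rightarrow> (real \<Rightarrow> 'a \<Rightarrow> real) \<Rightarrow> 'a \<Rightarrow> ereal" where
  "exit_time z W \<omega> = Inf (ereal ` {t. 0 \<le> t \<and> \<bar>W t \<omega>\<bar> = z})"

definition cond_law :: "'a measure \<Rightarrow> (real \<Rightarrow> 'a \<Rightarrow> real) \<Rightarrow> real \<Rightarrow> real \<Rightarrow> real set \<Rightarrow> real" where
  "cond_law M W z u A =
     measure M {\<omega>\<in>space M. W u \<omega> \<in> A \<and> exit_time z W \<omega> > ereal u}
     / measure M {\<omega>\<in>space M. exit_time z W \<omega> > ereal u}"

end

theory Submission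
  imports Defs
begin


lemma exit_gt_iff:
  fixes w :: "real \<Rightarrow> real"
  assumes cont: "continuous_on {0..} w" and w0: "\<bar>w 0\<bar> < z" and u: "0 \<le> u"
  shows "Inf (ereal ` {t. 0 \<le> t \<and> \<bar>w t\<bar> = z}) > ereal u \<longleftrightarrow> (\<forall>t\<in>{0..u}. \<bar>w t\<bar> < z)"
proof
  assume H: "Inf (ereal ` {t. 0 \<le> t \<and> \<bar>w t\<bar> = z}) > ereal u"
  show "\<forall>t\<in>{0..u}. \<bar>w t\<bar> < z"
  proof (rule ccontr)
    assume "\<not> (\<forall>t\<in>{0..u}. \<bar>w t\<bar> < z)"
    then obtain t where t: "0 \<le> t" "t \<le> u" "\<bar>w t\<bar> \<ge> z" by force
    have "continuous_on {0..t} (\<lambda>s. \<bar>w s\<bar>)"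
      by (intro continuous_intros continuous_on_subset[OF cont]) auto
    from IVT'[of "\<lambda>s. \<bar>w s\<bar>", OF _ t(3) t(1) this] w0
    obtain s where s: "0 \<le> s" "s \<le> t" "\<bar>w s\<bar> = z" by force
    then have "Inf (ereal ` {t. 0 \<le> t \<and> \<bar>w t\<bar> = z}) \<le> ereal s"
      by (intro Inf_lower) auto
    also have "ereal s \<le> ereal u" using s t by simp
    finally show False using H by simp
  qed
next
  assume H: "\<forall>t\<in>{0..u}. \<bar>w t\<bar> < z"
  then have wu: "\<bar>w u\<bar> < z" using u by auto
  from cont u have "\<forall>e>0. \<exists>d>0. \<forall>x'\<in>{0..}. dist x' u < d \<longrightarrow> dist (w x') (w u) < e"
    unfolding continuous_on_iff by auto
  then obtain d where d: "d > 0" "\<And>x'. x' \<ge> 0 \<Longrightarrow> dist x' u < d \<Longrightarrow> dist (w x') (w u) < z - \<bar>w u\<bar>"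
    using wu by (metis atLeast_iff diff_gt_0_iff_gt)
  have "ereal (u + d) \<le> Inf (ereal ` {t. 0 \<le> t \<and> \<bar>w t\<bar> = z})"
  proof (rule Inf_greatest)
    fix e assume "e \<in> ereal ` {t. 0 \<le> t \<and> \<bar>w t\<bar> = z}"
    then obtain t where t: "e = ereal t" "0 \<le> t" "\<bar>w t\<bar> = z" by auto
    have "t \<ge> u + d"
    proof (rule ccontr)
      assume "\<not> t \<ge> u + d"
      show False
      proof (cases "t \<le> u")
        case True then show False using H t by auto
      next
        case False
        then have "dist t u < d" using \<open>\<not> t \<ge> u + d\<close> by (simp add: dist_real_def)
        from d(2)[OF t(2) this] t(3) show False by (simp add: dist_real_def)
      qed
    qed
    then show "ereal (u + d) \<le> e" using t by simp
  qed
  then show "Inf (ereal ` {t. 0 \<le> t \<and> \<bar>w t\<bar> = z}) > ereal u"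
  proof -
    have "ereal u < ereal (u + d)" using d(1) by simp
    also note \<open>ereal (u + d) \<le> _\<close>
    finally show ?thesis .
  qed
qed

lemma grid_char:
  fixes w :: "real \<Rightarrow> real"
  assumes cont: "continuous_on {0..L} w" and L: "0 \<le> L"
  shows "(\<forall>t\<in>{0..L}. \<bar>w t\<bar> < z) \<longleftrightarrow>
    (\<exists>m::nat. \<forall>N k. \<bar>w (L * real (min k (2^N)) / 2^N)\<bar> \<le> z - 1 / (real m + 1))"
proof
  assume H: "\<forall>t\<in>{0..L}. \<bar>w t\<bar> < z"
  have "continuous_on {0..L} (\<lambda>t. \<bar>w t\<bar>)" by (intro continuous_intros cont)
  from continuous_attains_sup[OF compact_Icc _ this] L
  obtain t0 where t0: "t0 \<in> {0..L}" "\<And>t. t \<in> {0..L} \<Longrightarrow> \<bar>w t\<bar> \<le> \<bar>w t0\<bar>" by auto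
  have "z - \<bar>w t0\<bar> > 0" using H t0 by auto
  from ex_inverse_of_nat_less[OF this] obtain n::nat where n: "n > 0" "inverse (real n) < z - \<bar>w t0\<bar>" by auto
  have gp: "L * real (min k (2^N)) / 2^N \<in> {0..L}" for N k :: nat
  proof -
    have "real (min k (2^N)) \<le> 2^N" by simp
    then have "L * real (min k (2^N)) \<le> L * 2^N" using L by (intro mult_left_mono) auto
    then show ?thesis using L by (auto simp: field_simps)
  qed
  show "\<exists>m::nat. \<forall>N k. \<bar>w (L * real (min k (2^N)) / 2^N)\<bar> \<le> z - 1 / (real m + 1)"
  proof (intro exI allI)
    fix N k :: nat
    have "real (n - 1) + 1 = real n" using n by simp
    then have "1 / (real (n - 1) + 1) = inverse (real n)" by (simp add: field_simps)
    then show "\<bar>w (L * real (min k (2^N)) / 2^N)\<bar> \<le> z - 1 / (real (n - 1) + 1)"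
      using t0(2)[OF gp[of k N]] n by linarith
  qed
next
  assume "\<exists>m::nat. \<forall>N k. \<bar>w (L * real (min k (2^N)) / 2^N)\<bar> \<le> z - 1 / (real m + 1)"
  then obtain m::nat where m: "\<And>N k. \<bar>w (L * real (min k (2^N)) / 2^N)\<bar> \<le> z - 1 / (real m + 1)" by auto
  have pos: "1 / (real m + 1) > 0" by simp
  show "\<forall>t\<in>{0..L}. \<bar>w t\<bar> < z"
  proof
    fix t assume t: "t \<in> {0..L}"
    have "\<bar>w t\<bar> \<le> z - 1 / (real m + 1)"
    proof (cases "L = 0")
      case True
      then have "t = 0" using t by auto
      then show ?thesis using m[of 0 0] True by simp
    next
      case False
      then have Lp: "L > 0" using L by auto
      define k where "k N = nat \<lfloor>t / L * 2^N\<rfloor>" for N :: nat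
      define s where "s N = L * real (min (k N) (2^N)) / 2^N" for N :: nat
      have tl: "t / L \<le> 1" "0 \<le> t / L" using t Lp by auto
      have kle: "k N \<le> 2^N" for N
      proof -
        have "t / L * 2^N \<le> 1 * 2^N" using tl by (intro mult_right_mono) auto
        then have "\<lfloor>t / L * 2^N\<rfloor> \<le> \<lfloor>(2::real)^N\<rfloor>" by (intro floor_mono) simp
        then have "\<lfloor>t / L * 2^N\<rfloor> \<le> 2^N" by simp
        then show ?thesis unfolding k_def by (simp add: nat_le_iff)
      qed
      have rk: "real (k N) = of_int \<lfloor>t / L * 2^N\<rfloor>" for N
      proof -
        have "0 \<le> t / L * 2^N" using tl by (intro mult_nonneg_nonneg) auto
        then have "0 \<le> \<lfloor>t / L * 2^N\<rfloor>" by simp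
        then show ?thesis unfolding k_def by simp
      qed
      have s_eq: "s N = L * real (k N) / 2^N" for N using kle[of N] unfolding s_def by (simp add: min_absorb1)
      have sle: "s N \<le> t" for N
      proof -
        have "real (k N) \<le> t / L * 2^N" using rk[of N] by linarith
        then have "L * real (k N) \<le> L * (t / L * 2^N)" using Lp by (intro mult_left_mono) auto
        then show ?thesis using Lp by (simp add: s_eq field_simps)
      qed
      have sge: "t - L * (1/2)^N \<le> s N" for N
      proof -
        have "t / L * 2^N - 1 \<le> real (k N)" using rk[of N] by linarith
        then have "L * (t / L * 2^N - 1) \<le> L * real (k N)" using Lp by (intro mult_left_mono) auto
        moreover have "L * (t / L * 2^N - 1) = t * 2^N - L" using Lp by (simp add: field_simps)
        ultimately have "t * 2^N - L \<le> L * real (k N)" by simp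
        then have "(t * 2^N - L) / 2^N \<le> L * real (k N) / 2^N" by (intro divide_right_mono) auto
        moreover have "(t * 2^N - L) / 2^N = t - L * (1/2)^N" by (simp add: field_simps power_divide)
        ultimately show ?thesis by (simp add: s_eq)
      qed
      have lim0: "(\<lambda>N. t - L * (1/2::real)^N) \<longlonglongrightarrow> t - L * 0"
        by (intro tendsto_intros LIMSEQ_power_zero) simp
      have "s \<longlonglongrightarrow> t"
        by (rule tendsto_sandwich[OF _ _ lim0[simplified] tendsto_const]) (auto intro!: always_eventually sge sle)
      moreover have sin: "s N \<in> {0..L}" for N
        using sle[of N] t unfolding s_eq using Lp by (auto intro!: divide_nonneg_pos)
      ultimately have "(\<lambda>N. w (s N)) \<longlonglongrightarrow> w t"
        using cont t by (intro continuous_on_tendsto_compose[OF cont]) auto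
      then have "(\<lambda>N. \<bar>w (s N)\<bar>) \<longlonglongrightarrow> \<bar>w t\<bar>" by (intro tendsto_intros)
      then show ?thesis
        by (rule tendsto_upperbound) (auto simp: s_def m)
    qed
    then show "\<bar>w t\<bar> < z" using pos by linarith
  qed
qed



locale bm =
  fixes M :: "'a measure" and W :: "real \<Rightarrow> 'a \<Rightarrow> real" and x0 :: real
  assumes bm: "brownian_motion_from M W x0"
begin

sublocale prob_space M using bm unfolding brownian_motion_from_def by auto

lemma W_meas[measurable]: "0 \<le> t \<Longrightarrow> W t \<in> borel_measurable M"
  using bm unfolding brownian_motion_from_def by auto

lemma W_0: "\<omega> \<in> space M \<Longrightarrow> W 0 \<omega> = x0"
  using bm unfolding brownian_motion_from_def by auto

lemma W_cont: "\<omega> \<in> space M \<Longrightarrow> continuous_on {0..} (\<lambda>t. W t \<omega>)"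
  using bm unfolding brownian_motion_from_def by auto

lemma W_incr: "0 \<le> s \<Longrightarrow> s < t \<Longrightarrow>
  distributed M lborel (\<lambda>\<omega>. W t \<omega> - W s \<omega>) (\<lambda>y. ennreal (normal_density 0 (sqrt (t - s)) y))"
  using bm unfolding brownian_motion_from_def by auto

lemma W_indep: "0 \<le> ts 0 \<Longrightarrow> (\<forall>i<n. ts i < ts (Suc i)) \<Longrightarrow>
  indep_vars (\<lambda>_. borel) (\<lambda>i \<omega>. W (ts (Suc i)) \<omega> - W (ts i) \<omega>) {..<n}"
  using bm unfolding brownian_motion_from_def by auto

lemma shift_scale_bm:
  assumes r: "0 \<le> r" and a: "a > 0"
  shows "brownian_motion_from M (\<lambda>t \<omega>. (y + (W (r + a\<^sup>2 * t) \<omega> - W r \<omega>)) / a) (y / a)"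
  unfolding brownian_motion_from_def
proof (intro conjI allI impI ballI)
  show "prob_space M" by unfold_locales
next
  fix t :: real assume "0 \<le> t"
  then have "0 \<le> r + a\<^sup>2 * t" using r by auto
  then show "(\<lambda>\<omega>. (y + (W (r + a\<^sup>2 * t) \<omega> - W r \<omega>)) / a) \<in> borel_measurable M"
    using r by measurable
next
  fix \<omega> assume "\<omega> \<in> space M"
  then show "(y + (W (r + a\<^sup>2 * 0) \<omega> - W r \<omega>)) / a = y / a" by simp
next
  fix \<omega> assume \<omega>: "\<omega> \<in> space M"
  have "continuous_on {0..} (\<lambda>t. W (r + a\<^sup>2 * t) \<omega>)"
    by (rule continuous_on_compose2[OF W_cont[OF \<omega>]]) (auto intro!: continuous_intros simp: r)
  then show "continuous_on {0..} (\<lambda>t. (y + (W (r + a\<^sup>2 * t) \<omega> - W r \<omega>)) / a)"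
    by (intro continuous_intros) (use a in auto)
next
  fix s t :: real assume st: "0 \<le> s \<and> s < t"
  have lt: "r + a\<^sup>2 * s < r + a\<^sup>2 * t" using st a by auto
  have "0 \<le> r + a\<^sup>2 * s" using st r by auto
  from normal_density_affine[OF W_incr[OF this lt], of "1/a" 0]
  have D: "distributed M lborel (\<lambda>\<omega>. 0 + 1 / a * (W (r + a\<^sup>2 * t) \<omega> - W (r + a\<^sup>2 * s) \<omega>))
      (\<lambda>x. ennreal (normal_density (0 + 1 / a * 0) (\<bar>1 / a\<bar> * sqrt (r + a\<^sup>2 * t - (r + a\<^sup>2 * s))) x))"
    using a lt by simp
  have e1: "\<bar>1 / a\<bar> * sqrt (r + a\<^sup>2 * t - (r + a\<^sup>2 * s)) = sqrt (t - s)"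
  proof -
    have "r + a\<^sup>2 * t - (r + a\<^sup>2 * s) = a\<^sup>2 * (t - s)" by (simp add: algebra_simps)
    then show ?thesis using a by (simp add: real_sqrt_mult)
  qed
  have e2: "(\<lambda>\<omega>. 0 + 1 / a * (W (r + a\<^sup>2 * t) \<omega> - W (r + a\<^sup>2 * s) \<omega>)) =
     (\<lambda>\<omega>. (y + (W (r + a\<^sup>2 * t) \<omega> - W r \<omega>)) / a - (y + (W (r + a\<^sup>2 * s) \<omega> - W r \<omega>)) / a)"
    using a by (auto simp: field_simps)
  show "distributed M lborel (\<lambda>\<omega>. (y + (W (r + a\<^sup>2 * t) \<omega> - W r \<omega>)) / a - (y + (W (r + a\<^sup>2 * s) \<omega> - W r \<omega>)) / a)
     (\<lambda>x. ennreal (normal_density 0 (sqrt (t - s)) x))"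
    using D unfolding e1 e2 by simp
next
  fix ts :: "nat \<Rightarrow> real" and n :: nat
  assume H: "0 \<le> ts 0 \<and> (\<forall>i<n. ts i < ts (Suc i))"
  define ts' where "ts' i = r + a\<^sup>2 * ts i" for i
  have "0 \<le> ts' 0" using H r unfolding ts'_def by auto
  moreover have "\<forall>i<n. ts' i < ts' (Suc i)" using H a unfolding ts'_def by auto
  ultimately have I: "indep_vars (\<lambda>_. borel) (\<lambda>i \<omega>. W (ts' (Suc i)) \<omega> - W (ts' i) \<omega>) {..<n}"
    by (rule W_indep)
  have "indep_vars (\<lambda>_. borel) (\<lambda>i \<omega>. (W (ts' (Suc i)) \<omega> - W (ts' i) \<omega>) / a) {..<n}"
    by (rule indep_vars_compose2[OF I, where Y="\<lambda>_ v. v / a"]) simp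
  moreover have "(\<lambda>i \<omega>. (W (ts' (Suc i)) \<omega> - W (ts' i) \<omega>) / a) =
     (\<lambda>i \<omega>. (y + (W (r + a\<^sup>2 * ts (Suc i)) \<omega> - W r \<omega>)) / a - (y + (W (r + a\<^sup>2 * ts i) \<omega> - W r \<omega>)) / a)"
    using a by (auto simp: ts'_def fun_eq_iff field_simps)
  ultimately show "indep_vars (\<lambda>_. borel) (\<lambda>i \<omega>. (y + (W (r + a\<^sup>2 * ts (Suc i)) \<omega> - W r \<omega>)) / a -
       (y + (W (r + a\<^sup>2 * ts i) \<omega> - W r \<omega>)) / a) {..<n}" by simp
qed

end


locale bm_split = bm +
  fixes r S :: real
  assumes r_nonneg: "0 \<le> r" and S_pos: "0 < S"
begin

definition P :: "nat \<Rightarrow> 'a \<Rightarrow> nat \<Rightarrow> real" where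
  "P N \<omega> = (\<lambda>k. W (r * real (min k (2^N)) / 2^N) \<omega> - W 0 \<omega>)"

definition Q :: "nat \<Rightarrow> 'a \<Rightarrow> nat \<Rightarrow> real" where
  "Q N \<omega> = (\<lambda>k. W (r + S * real (min k (2^N)) / 2^N) \<omega> - W r \<omega>)"

definition ts :: "nat \<Rightarrow> nat \<Rightarrow> real" where
  "ts N i = (if i \<le> 2^N then r * real i / 2^N else r + S * real (i - 2^N) / 2^N)"

lemma ts_mono: assumes r_pos: "0 < r" shows "ts N i < ts N (Suc i)"
proof -
  consider "Suc i \<le> 2^N" | "i = 2^N" | "i > 2^N" by linarith
  then show ?thesis
  proof cases
    case 1 then show ?thesis using r_pos by (simp add: ts_def divide_strict_right_mono)
  next
    case 2 then show ?thesis using r_pos S_pos by (simp add: ts_def)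
  next
    case 3
    then have "real (Suc i - 2^N) = real (i - 2^N) + 1" by (simp add: Suc_diff_le)
    then show ?thesis using 3 S_pos by (simp add: ts_def field_simps)
  qed
qed

lemma ts_0: "ts N 0 = 0" by (simp add: ts_def)

lemma ts_nonneg: "0 \<le> ts N i"
  using r_nonneg S_pos by (auto simp: ts_def)

lemma ts_pre: "ts N (min k (2^N)) = r * real (min k (2^N)) / 2^N"
  by (simp add: ts_def)

lemma ts_post: "ts N (2^N + m) = r + S * real m / 2^N"
  by (cases "m = 0") (auto simp: ts_def)

lemma P_meas[measurable]: "P N \<in> measurable M (PiM UNIV (\<lambda>_. borel))"
proof -
  have "0 \<le> r * real (min k (2^N)) / 2^N" for k using r_nonneg by simp
  then show ?thesis unfolding P_def
    by (intro measurable_PiM_single') auto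
qed

lemma Q_meas[measurable]: "Q N \<in> measurable M (PiM UNIV (\<lambda>_. borel))"
proof -
  have "0 \<le> r + S * real (min k (2^N)) / 2^N" for k using r_nonneg S_pos by simp
  then show ?thesis unfolding Q_def using r_nonneg
    by (intro measurable_PiM_single') auto
qed

lemma level_indep:
  assumes r_pos: "0 < r" shows "indep_var (PiM UNIV (\<lambda>_. borel)) (P N) (PiM UNIV (\<lambda>_. borel)) (Q N)"
proof -
  define Inc where "Inc i \<omega> = W (ts N (Suc i)) \<omega> - W (ts N i) \<omega>" for i \<omega>
  define A where "A = {..<(2::nat)^N}"
  define B where "B = {(2::nat)^N..<2^N + 2^N}"
  have I: "indep_vars (\<lambda>_. borel) Inc {..<2^N + 2^N}"
    unfolding Inc_def by (rule W_indep) (auto simp: ts_0 ts_mono[OF r_pos])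
  have I2: "indep_var (PiM A (\<lambda>_. borel)) (\<lambda>\<omega>. restrict (\<lambda>i. Inc i \<omega>) A)
      (PiM B (\<lambda>_. borel)) (\<lambda>\<omega>. restrict (\<lambda>i. Inc i \<omega>) B)"
    by (rule indep_var_restrict[OF I]) (auto simp: A_def B_def)
  define fpre where "fpre v = (\<lambda>k. \<Sum>i<min k (2^N). v i)" for v :: "nat \<Rightarrow> real"
  define fpost where "fpost v = (\<lambda>k. \<Sum>i\<in>{2^N..<2^N + min k (2^N)}. v i)" for v :: "nat \<Rightarrow> real"
  have m1: "fpre \<in> measurable (PiM A (\<lambda>_. borel)) (PiM UNIV (\<lambda>_. borel))"
    unfolding fpre_def
    by (intro measurable_PiM_single' borel_measurable_sum measurable_component_singleton)
       (auto simp: A_def)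
  have m2: "fpost \<in> measurable (PiM B (\<lambda>_. borel)) (PiM UNIV (\<lambda>_. borel))"
    unfolding fpost_def
    by (intro measurable_PiM_single' borel_measurable_sum measurable_component_singleton)
       (auto simp: B_def)
  note I3 = indep_var_compose[OF I2 m1 m2]
  have e1: "fpre \<circ> (\<lambda>\<omega>. restrict (\<lambda>i. Inc i \<omega>) A) = P N"
  proof (intro ext)
    fix \<omega> k
    have "(\<Sum>i<min k (2^N). restrict (\<lambda>i. Inc i \<omega>) A i) = (\<Sum>i<min k (2^N). Inc i \<omega>)"
      by (intro sum.cong) (auto simp: A_def)
    also have "\<dots> = W (ts N (min k (2^N))) \<omega> - W (ts N 0) \<omega>"
      unfolding Inc_def by (rule sum_lessThan_telescope)
    finally show "(fpre \<circ> (\<lambda>\<omega>. restrict (\<lambda>i. Inc i \<omega>) A)) \<omega> k = P N \<omega> k"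
      by (simp add: fpre_def P_def ts_pre ts_0)
  qed
  have e2: "fpost \<circ> (\<lambda>\<omega>. restrict (\<lambda>i. Inc i \<omega>) B) = Q N"
  proof (intro ext)
    fix \<omega> k
    have "(\<Sum>i\<in>{2^N..<2^N + min k (2^N)}. restrict (\<lambda>i. Inc i \<omega>) B i) =
        (\<Sum>i\<in>{2^N..<2^N + min k (2^N)}. Inc i \<omega>)"
      by (intro sum.cong) (auto simp: B_def)
    also have "\<dots> = W (ts N (2^N + min k (2^N))) \<omega> - W (ts N (2^N)) \<omega>"
      unfolding Inc_def by (rule sum_Suc_diff') simp
    finally show "(fpost \<circ> (\<lambda>\<omega>. restrict (\<lambda>i. Inc i \<omega>) B)) \<omega> k = Q N \<omega> k"
      using ts_post[of N 0] by (simp add: fpost_def Q_def ts_post)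
  qed
  show ?thesis using I3 unfolding e1 e2 .
qed

end


abbreviation PI :: "(nat \<Rightarrow> real) measure" where "PI \<equiv> PiM UNIV (\<lambda>_. borel)"

lemma double_meas: "(\<lambda>v k. v (2 * k)) \<in> measurable PI PI"
  by (intro measurable_PiM_single' measurable_component_singleton) (auto simp: space_PiM)

context prob_space
begin

definition Fam :: "(nat \<Rightarrow> 'a \<Rightarrow> nat \<Rightarrow> real) \<Rightarrow> nat \<Rightarrow> 'a set set" where
  "Fam P N = {P N -` A \<inter> space M | A. A \<in> sets PI}"

lemma Fam_mono_Suc:
  assumes meas: "\<And>N. P N \<in> measurable M PI"
    and nest: "\<And>N \<omega>. P N \<omega> = (\<lambda>k. P (Suc N) \<omega> (2*k))"
  shows "Fam P N \<subseteq> Fam P (Suc N)"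
proof
  fix a assume "a \<in> Fam P N"
  then obtain A where A: "A \<in> sets PI" "a = P N -` A \<inter> space M" by (auto simp: Fam_def)
  define A' where "A' = (\<lambda>v k. v (2 * k)) -` A \<inter> space PI"
  have "A' \<in> sets PI" unfolding A'_def using A(1) double_meas by (rule measurable_sets[rotated])
  moreover have "a = P (Suc N) -` A' \<inter> space M"
    unfolding A(2) A'_def using nest[of N] by (auto simp: space_PiM)
  ultimately show "a \<in> Fam P (Suc N)" unfolding Fam_def by blast
qed

lemma Fam_mono:
  assumes meas: "\<And>N. P N \<in> measurable M PI"
    and nest: "\<And>N \<omega>. P N \<omega> = (\<lambda>k. P (Suc N) \<omega> (2*k))"
  shows "N \<le> N' \<Longrightarrow> Fam P N \<subseteq> Fam P N'"
  using Fam_mono_Suc[where P=P, OF assms] by (rule lift_Suc_mono_le)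

lemma Fam_events: assumes "\<And>N. P N \<in> measurable M PI" shows "Fam P N \<subseteq> events"
  using assms by (auto simp: Fam_def)

lemma Fam_Int_stable:
  assumes meas: "\<And>N. P N \<in> measurable M PI"
    and nest: "\<And>N \<omega>. P N \<omega> = (\<lambda>k. P (Suc N) \<omega> (2*k))"
  shows "Int_stable (\<Union>N. Fam P N)"
proof (rule Int_stableI)
  fix a b assume "a \<in> (\<Union>N. Fam P N)" "b \<in> (\<Union>N. Fam P N)"
  then obtain N1 N2 where "a \<in> Fam P N1" "b \<in> Fam P N2" by auto
  then have "a \<in> Fam P (max N1 N2)" "b \<in> Fam P (max N1 N2)"
    using Fam_mono[where P=P, OF assms] by (metis max.cobounded1 max.cobounded2 subsetD)+
  then obtain A B where "A \<in> sets PI" "B \<in> sets PI"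
    "a = P (max N1 N2) -` A \<inter> space M" "b = P (max N1 N2) -` B \<inter> space M"
    by (auto simp: Fam_def)
  then have "a \<inter> b = P (max N1 N2) -` (A \<inter> B) \<inter> space M" "A \<inter> B \<in> sets PI" by auto
  then show "a \<inter> b \<in> (\<Union>N. Fam P N)" unfolding Fam_def by blast
qed

lemma lift_indep:
  assumes measP: "\<And>N. P N \<in> measurable M PI"
    and nestP: "\<And>N \<omega>. P N \<omega> = (\<lambda>k. P (Suc N) \<omega> (2*k))"
    and measQ: "\<And>N. Q N \<in> measurable M PI"
    and nestQ: "\<And>N \<omega>. Q N \<omega> = (\<lambda>k. Q (Suc N) \<omega> (2*k))"
    and lev: "\<And>N. indep_var PI (P N) PI (Q N)"
  shows "indep_set (sigma_sets (space M) (\<Union>N. Fam P N)) (sigma_sets (space M) (\<Union>N. Fam Q N))"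
proof (rule indep_set_sigma_sets[OF _ Fam_Int_stable[where P=P, OF measP nestP] Fam_Int_stable[where P=Q, OF measQ nestQ]])
  show "indep_set (\<Union>N. Fam P N) (\<Union>N. Fam Q N)"
  proof (rule indep_setI)
    show "(\<Union>N. Fam P N) \<subseteq> events" "(\<Union>N. Fam Q N) \<subseteq> events"
      using Fam_events measP measQ by blast+
  next
    fix a b assume "a \<in> (\<Union>N. Fam P N)" "b \<in> (\<Union>N. Fam Q N)"
    then obtain N1 N2 where "a \<in> Fam P N1" "b \<in> Fam Q N2" by auto
    then have ab: "a \<in> Fam P (max N1 N2)" "b \<in> Fam Q (max N1 N2)"
      using Fam_mono[where P=P, OF measP nestP] Fam_mono[where P=Q, OF measQ nestQ]
      by (metis max.cobounded1 max.cobounded2 subsetD)+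
    from lev[of "max N1 N2"] have "indep_set
      (sigma_sets (space M) {P (max N1 N2) -` A \<inter> space M | A. A \<in> sets PI})
      (sigma_sets (space M) {Q (max N1 N2) -` A \<inter> space M | A. A \<in> sets PI})"
      unfolding indep_var_eq by simp
    then show "prob (a \<inter> b) = prob a * prob b"
      by (rule indep_setD) (use ab in \<open>auto simp: Fam_def intro: sigma_sets.Basic\<close>)
  qed
qed

lemma indep_var_from_sigma:
  assumes ind: "indep_set (sigma_sets (space M) G1) (sigma_sets (space M) G2)"
    and G: "G1 \<subseteq> Pow (space M)" "G2 \<subseteq> Pow (space M)"
    and X1: "X \<in> measurable (sigma (space M) G1) S" and X: "X \<in> measurable M S"
    and Y1: "Y \<in> measurable (sigma (space M) G2) T" and Y: "Y \<in> measurable M T"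
  shows "indep_var S X T Y"
  unfolding indep_var_eq
proof (intro conjI X Y)
  have sub1: "sigma_sets (space M) {X -` A \<inter> space M | A. A \<in> sets S} \<subseteq> sigma_sets (space M) G1"
  proof (rule sigma_algebra.sigma_sets_subset[OF sigma_algebra_sigma_sets[OF G(1)]])
    show "{X -` A \<inter> space M |A. A \<in> sets S} \<subseteq> sigma_sets (space M) G1"
      using measurable_sets[OF X1] G(1) by (auto simp: sets_measure_of space_measure_of_conv)
  qed
  have sub2: "sigma_sets (space M) {Y -` A \<inter> space M | A. A \<in> sets T} \<subseteq> sigma_sets (space M) G2"
  proof (rule sigma_algebra.sigma_sets_subset[OF sigma_algebra_sigma_sets[OF G(2)]])
    show "{Y -` A \<inter> space M |A. A \<in> sets T} \<subseteq> sigma_sets (space M) G2"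
      using measurable_sets[OF Y1] G(2) by (auto simp: sets_measure_of space_measure_of_conv)
  qed
  show "indep_set (sigma_sets (space M) {X -` A \<inter> space M |A. A \<in> sets S})
     (sigma_sets (space M) {Y -` A \<inter> space M |A. A \<in> sets T})"
    using ind unfolding indep_set_def
    by (rule indep_sets_mono_sets) (use sub1 sub2 in \<open>auto split: bool.split\<close>)
qed

end


lemma (in prob_space) freeze:
  assumes ind: "indep_var S X T Y" and H: "H \<in> sets (S \<Otimes>\<^sub>M T)"
  shows "emeasure M {\<omega>\<in>space M. (X \<omega>, Y \<omega>) \<in> H} =
    (\<integral>\<^sup>+\<omega>. emeasure M {\<omega>'\<in>space M. (X \<omega>, Y \<omega>') \<in> H} \<partial>M)"
proof -
  from ind have X: "X \<in> measurable M S" and Y: "Y \<in> measurable M T"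
    and eq: "distr M S X \<Otimes>\<^sub>M distr M T Y = distr M (S \<Otimes>\<^sub>M T) (\<lambda>x. (X x, Y x))"
    unfolding indep_var_distribution_eq by auto
  interpret DY: prob_space "distr M T Y" by (rule prob_space_distr[OF Y])
  have XY: "(\<lambda>x. (X x, Y x)) \<in> measurable M (S \<Otimes>\<^sub>M T)" using X Y by (rule measurable_Pair)
  have H': "H \<in> sets (distr M S X \<Otimes>\<^sub>M distr M T Y)"
    using H by (simp add: sets_pair_measure_cong[OF sets_distr sets_distr] del: sets_distr)
  have "emeasure M {\<omega>\<in>space M. (X \<omega>, Y \<omega>) \<in> H} = emeasure (distr M (S \<Otimes>\<^sub>M T) (\<lambda>x. (X x, Y x))) H"
    by (subst emeasure_distr[OF XY H]) (auto intro!: arg_cong[where f="emeasure M"])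
  also have "\<dots> = emeasure (distr M S X \<Otimes>\<^sub>M distr M T Y) H" by (simp add: eq)
  also have "\<dots> = (\<integral>\<^sup>+x. emeasure (distr M T Y) (Pair x -` H) \<partial>distr M S X)"
    by (rule DY.emeasure_pair_measure_alt[OF H'])
  also have "\<dots> = (\<integral>\<^sup>+\<omega>. emeasure (distr M T Y) (Pair (X \<omega>) -` H) \<partial>M)"
    by (rule nn_integral_distr[OF X DY.measurable_emeasure_Pair[OF H']])
  also have "\<dots> = (\<integral>\<^sup>+\<omega>. emeasure M {\<omega>'\<in>space M. (X \<omega>, Y \<omega>') \<in> H} \<partial>M)"
  proof (intro nn_integral_cong)
    fix \<omega>
    have "Pair (X \<omega>) -` H \<in> sets T" using H by (rule sets_Pair1)
    then show "emeasure (distr M T Y) (Pair (X \<omega>) -` H) = emeasure M {\<omega>'\<in>space M. (X \<omega>, Y \<omega>') \<in> H}"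
      by (subst emeasure_distr[OF Y]) (auto intro!: arg_cong[where f="emeasure M"])
  qed
  finally show ?thesis .
qed

lemma (in prob_space) freeze_meas:
  assumes ind: "indep_var S X T Y" and H: "H \<in> sets (S \<Otimes>\<^sub>M T)"
  shows "(\<lambda>\<omega>. emeasure M {\<omega>'\<in>space M. (X \<omega>, Y \<omega>') \<in> H}) \<in> borel_measurable M"
proof -
  from ind have X: "X \<in> measurable M S" and Y: "Y \<in> measurable M T"
    unfolding indep_var_distribution_eq by auto
  interpret DY: sigma_finite_measure "distr M T Y"
    using prob_space_distr[OF Y] by (simp add: prob_space_imp_sigma_finite)
  have m: "(\<lambda>x. emeasure (distr M T Y) (Pair x -` H)) \<in> borel_measurable S"
    by (rule DY.measurable_emeasure_Pair) (use H in \<open>simp add: sets_pair_measure_cong[OF refl sets_distr] del: sets_distr\<close>)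
  have "(\<lambda>\<omega>. emeasure (distr M T Y) (Pair (X \<omega>) -` H)) \<in> borel_measurable M"
    using measurable_compose[OF X m] by simp
  moreover have "emeasure (distr M T Y) (Pair (X \<omega>) -` H) = emeasure M {\<omega>'\<in>space M. (X \<omega>, Y \<omega>') \<in> H}" for \<omega>
  proof -
    have "Pair (X \<omega>) -` H \<in> sets T" using H by (rule sets_Pair1)
    then show ?thesis
      by (subst emeasure_distr[OF Y]) (auto intro!: arg_cong[where f="emeasure M"])
  qed
  ultimately show ?thesis by simp
qed

abbreviation PI2 :: "(nat \<times> nat \<Rightarrow> real) measure" where "PI2 \<equiv> PiM UNIV (\<lambda>_. borel)"

context bm_split
begin

definition X :: "real \<Rightarrow> 'a \<Rightarrow> real" where
  "X z \<omega> = (if \<exists>m::nat. \<forall>N k. \<bar>x0 + P N \<omega> k\<bar> \<le> z - 1 / (real m + 1) then x0 + P 0 \<omega> 1 else z)"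

definition Y :: "'a \<Rightarrow> nat \<times> nat \<Rightarrow> real" where
  "Y \<omega> = (\<lambda>(N, k). Q N \<omega> k)"

lemma min_double: "real (min (2 * k) (2 * 2^N)) = 2 * real (min k (2^N :: nat))"
  by (simp add: min_def)

lemma P_nest: "P N \<omega> = (\<lambda>k. P (Suc N) \<omega> (2*k))"
  unfolding P_def by (auto simp: min_double)

lemma Q_nest: "Q N \<omega> = (\<lambda>k. Q (Suc N) \<omega> (2*k))"
  unfolding Q_def by (auto simp: min_double)

lemma Y_meas[measurable]: "Y \<in> measurable M PI2"
  unfolding Y_def by (intro measurable_PiM_single') auto

lemma X_meas[measurable]: "X z \<in> borel_measurable M"
  unfolding X_def by measurable

definition X' :: "real \<Rightarrow> 'a \<Rightarrow> nat \<times> nat \<Rightarrow> real" where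
  "X' z \<omega> = (\<lambda>_. X z \<omega>)"

lemma X'_meas[measurable]: "X' z \<in> measurable M PI2"
  unfolding X'_def by (intro measurable_PiM_single') auto

lemma indep_XY: assumes r_pos: "0 < r" shows "indep_var PI2 (X' z) PI2 Y"
proof -
  define G1 where "G1 = (\<Union>N. Fam P N)"
  define G2 where "G2 = (\<Union>N. Fam Q N)"
  have G: "G1 \<subseteq> Pow (space M)" "G2 \<subseteq> Pow (space M)"
    unfolding G1_def G2_def Fam_def by auto
  have ind: "indep_set (sigma_sets (space M) G1) (sigma_sets (space M) G2)"
    unfolding G1_def G2_def
    by (rule lift_indep[where P=P and Q=Q, OF P_meas P_nest Q_meas Q_nest level_indep[OF r_pos]])
  have Pm: "P N \<in> measurable (sigma (space M) G1) PI" for N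
  proof (rule measurableI)
    fix A assume "A \<in> sets PI"
    then have "P N -` A \<inter> space M \<in> G1" unfolding G1_def Fam_def by blast
    then show "P N -` A \<inter> space (sigma (space M) G1) \<in> sets (sigma (space M) G1)"
      using G by (simp add: sets_measure_of space_measure_of_conv sigma_sets.Basic)
  qed (auto simp: space_PiM)
  have Qm: "Q N \<in> measurable (sigma (space M) G2) PI" for N
  proof (rule measurableI)
    fix A assume "A \<in> sets PI"
    then have "Q N -` A \<inter> space M \<in> G2" unfolding G2_def Fam_def by blast
    then show "Q N -` A \<inter> space (sigma (space M) G2) \<in> sets (sigma (space M) G2)"
      using G by (simp add: sets_measure_of space_measure_of_conv sigma_sets.Basic)
  qed (auto simp: space_PiM)
  have Pc: "(\<lambda>\<omega>. P N \<omega> k) \<in> borel_measurable (sigma (space M) G1)" for N k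
    using measurable_compose[OF Pm measurable_component_singleton[of k UNIV]] by simp
  have Qc: "(\<lambda>\<omega>. Q N \<omega> k) \<in> borel_measurable (sigma (space M) G2)" for N k
    using measurable_compose[OF Qm measurable_component_singleton[of k UNIV]] by simp
  have X0: "X z \<in> borel_measurable (sigma (space M) G1)"
    unfolding X_def using Pc by measurable
  have X1: "X' z \<in> measurable (sigma (space M) G1) PI2"
    unfolding X'_def using X0 by (intro measurable_PiM_single') auto
  have Y1: "Y \<in> measurable (sigma (space M) G2) PI2"
    unfolding Y_def using Qc by (intro measurable_PiM_single') auto
  show ?thesis
    by (rule indep_var_from_sigma[OF ind G X1 X'_meas Y1 Y_meas])
qed

end


definition H :: "real \<Rightarrow> real set \<Rightarrow> ((nat \<times> nat \<Rightarrow> real) \<times> (nat \<times> nat \<Rightarrow> real)) set" where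
  "H z A = {pq \<in> space (PI2 \<Otimes>\<^sub>M PI2). fst pq (0,0) + snd pq (0,1) \<in> A \<and>
     (\<exists>m::nat. \<forall>N k. \<bar>fst pq (0,0) + snd pq (N,k)\<bar> \<le> z - 1 / (real m + 1))}"

lemma H_sets: "A \<in> sets borel \<Longrightarrow> H z A \<in> sets (PI2 \<Otimes>\<^sub>M PI2)"
proof -
  assume A[measurable]: "A \<in> sets borel"
  have [measurable]: "(\<lambda>x. fst x i) \<in> borel_measurable (PI2 \<Otimes>\<^sub>M PI2)" for i
    using measurable_compose[OF measurable_fst measurable_component_singleton[of i UNIV]] by simp
  have [measurable]: "(\<lambda>x. snd x i) \<in> borel_measurable (PI2 \<Otimes>\<^sub>M PI2)" for i
    using measurable_compose[OF measurable_snd measurable_component_singleton[of i UNIV]] by simp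
  show ?thesis unfolding H_def by measurable
qed

lemma space_PI2_pair[simp]: "pq \<in> space (PI2 \<Otimes>\<^sub>M PI2)"
  by (cases pq) (simp add: space_pair_measure space_PiM)

lemma in_H: "((p, q) \<in> H z A) \<longleftrightarrow> p (0,0) + q (0,1) \<in> A \<and>
     (\<exists>m::nat. \<forall>N k. \<bar>p (0,0) + q (N,k)\<bar> \<le> z - 1 / (real m + 1))"
  unfolding H_def by simp

context bm
begin

lemma exit_char:
  assumes "\<omega> \<in> space M" "0 \<le> u" "\<bar>x0\<bar> < z"
  shows "exit_time z W \<omega> > ereal u \<longleftrightarrow> (\<forall>t\<in>{0..u}. \<bar>W t \<omega>\<bar> < z)"
  unfolding exit_time_def
  by (rule exit_gt_iff[OF W_cont[OF assms(1)]]) (use assms W_0 in auto)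

end

context bm_split
begin

lemma pre_char:
  assumes \<omega>: "\<omega> \<in> space M"
  shows "(\<forall>t\<in>{0..r}. \<bar>W t \<omega>\<bar> < z) \<longleftrightarrow> (\<exists>m::nat. \<forall>N k. \<bar>x0 + P N \<omega> k\<bar> \<le> z - 1 / (real m + 1))"
proof -
  have c: "continuous_on {0..r} (\<lambda>t. W t \<omega>)"
    by (rule continuous_on_subset[OF W_cont[OF \<omega>]]) auto
  show ?thesis
    unfolding grid_char[OF c r_nonneg] using W_0[OF \<omega>] by (simp add: P_def)
qed

lemma post_char:
  assumes \<omega>: "\<omega> \<in> space M"
  shows "(\<forall>t\<in>{0..S}. \<bar>y + (W (r + t) \<omega> - W r \<omega>)\<bar> < z) \<longleftrightarrow> (\<exists>m::nat. \<forall>N k. \<bar>y + Q N \<omega> k\<bar> \<le> z - 1 / (real m + 1))"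
proof -
  have "continuous_on {0..S} (\<lambda>t. W (r + t) \<omega>)"
    by (rule continuous_on_compose2[OF W_cont[OF \<omega>]]) (auto intro!: continuous_intros simp: r_nonneg)
  then have c: "continuous_on {0..S} (\<lambda>t. y + (W (r + t) \<omega> - W r \<omega>))"
    by (intro continuous_intros)
  show ?thesis
    unfolding grid_char[OF c less_imp_le[OF S_pos]] by (simp add: Q_def)
qed

lemma split_interval:
  "(\<forall>t\<in>{0..r+S}. \<bar>W t \<omega>\<bar> < z) \<longleftrightarrow>
    (\<forall>t\<in>{0..r}. \<bar>W t \<omega>\<bar> < z) \<and> (\<forall>t\<in>{0..S}. \<bar>W r \<omega> + (W (r + t) \<omega> - W r \<omega>)\<bar> < z)"
proof safe
  fix t assume "\<forall>t\<in>{0..r+S}. \<bar>W t \<omega>\<bar> < z" "t \<in> {0..S}"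
  then show "\<bar>W r \<omega> + (W (r + t) \<omega> - W r \<omega>)\<bar> < z" using r_nonneg
    by (auto dest!: bspec[of _ _ "r + t"])
next
  fix t assume "\<forall>t\<in>{0..r+S}. \<bar>W t \<omega>\<bar> < z" "t \<in> {0..r}"
  then show "\<bar>W t \<omega>\<bar> < z" using S_pos by auto
next
  fix t assume a: "\<forall>t\<in>{0..r}. \<bar>W t \<omega>\<bar> < z" "\<forall>t\<in>{0..S}. \<bar>W r \<omega> + (W (r + t) \<omega> - W r \<omega>)\<bar> < z"
    "t \<in> {0..r+S}"
  show "\<bar>W t \<omega>\<bar> < z"
  proof (cases "t \<le> r")
    case True then show ?thesis using a by auto
  next
    case False then show ?thesis using a(2)[rule_format, of "t - r"] a(3) by auto
  qed
qed

lemma X_true: "(\<exists>m::nat. \<forall>N k. \<bar>x0 + P N \<omega> k\<bar> \<le> z - 1 / (real m + 1)) \<Longrightarrow> X z \<omega> = x0 + P 0 \<omega> 1"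
  unfolding X_def by (rule if_P)

lemma X_false: "\<not> (\<exists>m::nat. \<forall>N k. \<bar>x0 + P N \<omega> k\<bar> \<le> z - 1 / (real m + 1)) \<Longrightarrow> X z \<omega> = z"
  unfolding X_def by (rule if_not_P)

lemma P01: "P 0 \<omega> 1 = W r \<omega> - W 0 \<omega>" by (simp add: P_def)

lemma E_eq:
  assumes z: "\<bar>x0\<bar> < z"
  shows "{\<omega>\<in>space M. W (r+S) \<omega> \<in> A \<and> exit_time z W \<omega> > ereal (r+S)} =
    {\<omega>\<in>space M. (X' z \<omega>, Y \<omega>) \<in> H z A}"
proof (intro Collect_cong conj_cong refl)
  fix \<omega> assume \<omega>: "\<omega> \<in> space M"
  have ex: "exit_time z W \<omega> > ereal (r+S) \<longleftrightarrow>
     (\<forall>t\<in>{0..r}. \<bar>W t \<omega>\<bar> < z) \<and> (\<forall>t\<in>{0..S}. \<bar>W r \<omega> + (W (r + t) \<omega> - W r \<omega>)\<bar> < z)"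
    using exit_char[OF \<omega> _ z] r_nonneg S_pos split_interval by simp
  have P01: "x0 + P 0 \<omega> 1 = W r \<omega>" using W_0[OF \<omega>] by (simp add: P_def)
  have Q01: "Q 0 \<omega> 1 = W (r + S) \<omega> - W r \<omega>" "Q 0 \<omega> (Suc 0) = W (r + S) \<omega> - W r \<omega>" by (simp_all add: Q_def)
  have Q00: "Q 0 \<omega> 0 = 0" by (simp add: Q_def)
  show "(W (r+S) \<omega> \<in> A \<and> exit_time z W \<omega> > ereal (r+S)) \<longleftrightarrow> (X' z \<omega>, Y \<omega>) \<in> H z A"
  proof (cases "\<forall>t\<in>{0..r}. \<bar>W t \<omega>\<bar> < z")
    case True
    then have "X z \<omega> = W r \<omega>" using pre_char[OF \<omega>, of z] P01 X_true by simp
    then show ?thesis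
      using True ex post_char[OF \<omega>, of "W r \<omega>"] by (simp add: X'_def Y_def in_H Q01)
  next
    case False
    then have "X z \<omega> = z" using pre_char[OF \<omega>, of z] X_false by simp
    moreover have "\<not> \<bar>z + Q 0 \<omega> 0\<bar> \<le> z - 1 / (real m + 1)" for m
      using z by (simp add: Q00)
    ultimately have "(X' z \<omega>, Y \<omega>) \<notin> H z A"
      by (auto simp: X'_def Y_def in_H)
    then show ?thesis using False ex by simp
  qed
qed

lemma X_range:
  assumes "\<omega> \<in> space M"
  shows "X z \<omega> = z \<or> \<bar>X z \<omega>\<bar> < z"
proof (cases "\<exists>m::nat. \<forall>N k. \<bar>x0 + P N \<omega> k\<bar> \<le> z - 1 / (real m + 1)")
  case True
  then obtain m :: nat where m: "\<bar>x0 + P 0 \<omega> 1\<bar> \<le> z - 1 / (real m + 1)" by blast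
  have "1 / (real m + 1) > 0" by simp
  then have "\<bar>x0 + P 0 \<omega> 1\<bar> < z" using m by linarith
  then show ?thesis using X_true[OF True] by simp
qed (simp add: X_false)

lemma X_pre:
  assumes "\<omega> \<in> space M" "\<forall>t\<in>{0..r}. \<bar>W t \<omega>\<bar> < z"
  shows "\<bar>X z \<omega>\<bar> < z"
proof -
  have ex: "\<exists>m::nat. \<forall>N k. \<bar>x0 + P N \<omega> k\<bar> \<le> z - 1 / (real m + 1)"
    using pre_char[OF assms(1), of z] assms(2) by simp
  then obtain m :: nat where "\<forall>N k. \<bar>x0 + P N \<omega> k\<bar> \<le> z - 1 / (real m + 1)" by blast
  then have m: "\<bar>x0 + P 0 \<omega> 1\<bar> \<le> z - 1 / (real m + 1)" by blast
  have "1 / (real m + 1) > 0" by simp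
  then have "\<bar>x0 + P 0 \<omega> 1\<bar> < z" using m by linarith
  then show ?thesis using X_true[OF ex] by simp
qed

definition g :: "real \<Rightarrow> real set \<Rightarrow> real \<Rightarrow> ennreal" where
  "g z A y = emeasure M {\<omega>'\<in>space M. ((\<lambda>_. y), Y \<omega>') \<in> H z A}"

lemma g_z_zero: "z > 0 \<Longrightarrow> g z A z = 0"
proof -
  assume "z > 0"
  then have "\<not> \<bar>z + Q 0 \<omega>' 0\<bar> \<le> z - 1 / (real m + 1)" for m \<omega>'
    by (simp add: Q_def)
  then have "((\<lambda>_. z), Y \<omega>') \<notin> H z A" for \<omega>'
    by (auto simp: in_H Y_def)
  then show ?thesis by (simp add: g_def)
qed

lemma markov:
  assumes z: "\<bar>x0\<bar> < z" and A: "A \<in> sets borel"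
  shows "emeasure M {\<omega>\<in>space M. W (r+S) \<omega> \<in> A \<and> exit_time z W \<omega> > ereal (r+S)} =
      (\<integral>\<^sup>+\<omega>. g z A (X z \<omega>) \<partial>M)"
    and "(\<lambda>\<omega>. g z A (X z \<omega>)) \<in> borel_measurable M"
proof -
  have "emeasure M {\<omega>\<in>space M. W (r+S) \<omega> \<in> A \<and> exit_time z W \<omega> > ereal (r+S)} =
      (\<integral>\<^sup>+\<omega>. g z A (X z \<omega>) \<partial>M) \<and> (\<lambda>\<omega>. g z A (X z \<omega>)) \<in> borel_measurable M"
  proof (cases "r = 0")
    case False
    then have rp: "0 < r" using r_nonneg by auto
    have gX: "g z A (X z \<omega>) = emeasure M {\<omega>'\<in>space M. (X' z \<omega>, Y \<omega>') \<in> H z A}" for \<omega>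
      by (simp add: g_def X'_def)
    show ?thesis
      unfolding E_eq[OF z] gX
      using freeze[OF indep_XY[OF rp] H_sets[OF A]] freeze_meas[OF indep_XY[OF rp] H_sets[OF A]]
      by simp
  next
    case True
    have Xc: "X z \<omega> = x0" if \<omega>: "\<omega> \<in> space M" for \<omega>
    proof -
      have "\<forall>t\<in>{0..r}. \<bar>W t \<omega>\<bar> < z" using True W_0[OF \<omega>] z by simp
      then have "X z \<omega> = x0 + P 0 \<omega> 1" using pre_char[OF \<omega>, of z] X_true by simp
      then show ?thesis using True P01[of \<omega>] by simp
    qed
    have "{\<omega>\<in>space M. (X' z \<omega>, Y \<omega>) \<in> H z A} = {\<omega>'\<in>space M. ((\<lambda>_. x0), Y \<omega>') \<in> H z A}"
      using Xc by (auto simp: X'_def)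
    then have "emeasure M {\<omega>\<in>space M. W (r+S) \<omega> \<in> A \<and> exit_time z W \<omega> > ereal (r+S)} = g z A x0"
      unfolding E_eq[OF z] g_def by simp
    also have "\<dots> = (\<integral>\<^sup>+\<omega>. g z A x0 \<partial>M)" by (simp add: emeasure_space_1)
    also have "\<dots> = (\<integral>\<^sup>+\<omega>. g z A (X z \<omega>) \<partial>M)" by (intro nn_integral_cong) (simp add: Xc)
    finally show ?thesis
      using measurable_cong[of M "\<lambda>\<omega>. g z A (X z \<omega>)" "\<lambda>_. g z A x0"] Xc by simp
  qed
  then show "emeasure M {\<omega>\<in>space M. W (r+S) \<omega> \<in> A \<and> exit_time z W \<omega> > ereal (r+S)} =
      (\<integral>\<^sup>+\<omega>. g z A (X z \<omega>) \<partial>M)" "(\<lambda>\<omega>. g z A (X z \<omega>)) \<in> borel_measurable M" by auto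
qed

end


lemma abs_div_lt: "(z::real) > 0 \<Longrightarrow> \<bar>a / z\<bar> < 1 \<longleftrightarrow> \<bar>a\<bar> < z"
  by (simp add: abs_divide divide_less_eq)

context bm_split
begin

lemma V_eq:
  assumes z: "z > 0" and y: "\<bar>y\<bar> < z" and St: "S = z\<^sup>2 * t'"
  defines "V \<equiv> \<lambda>t \<omega>. (y + (W (r + z\<^sup>2 * t) \<omega> - W r \<omega>)) / z"
  shows "{\<omega>\<in>space M. V t' \<omega> \<in> (\<lambda>v. z * v) -` A \<and> exit_time 1 V \<omega> > ereal t'} =
     {\<omega>'\<in>space M. ((\<lambda>_. y), Y \<omega>') \<in> H z A}"
proof (intro Collect_cong conj_cong refl)
  fix \<omega> assume \<omega>: "\<omega> \<in> space M"
  have bmV: "brownian_motion_from M V (y / z)"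
    unfolding V_def by (rule shift_scale_bm[OF r_nonneg z])
  interpret V: bm M V "y / z" by (rule bm.intro[OF bmV])
  have t'pos: "0 < t'" using St S_pos z by (metis zero_less_mult_iff zero_less_power2 not_less_iff_gr_or_eq)
  have yz: "\<bar>y / z\<bar> < 1" using y z by (simp add: abs_div_lt)
  have e1: "exit_time 1 V \<omega> > ereal t' \<longleftrightarrow> (\<forall>\<tau>\<in>{0..t'}. \<bar>V \<tau> \<omega>\<bar> < 1)"
    by (rule V.exit_char[OF \<omega> less_imp_le[OF t'pos] yz])
  have e2: "(\<forall>\<tau>\<in>{0..t'}. \<bar>V \<tau> \<omega>\<bar> < 1) \<longleftrightarrow> (\<forall>t\<in>{0..S}. \<bar>y + (W (r + t) \<omega> - W r \<omega>)\<bar> < z)"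
  proof -
    have a: "\<bar>V \<tau> \<omega>\<bar> < 1 \<longleftrightarrow> \<bar>y + (W (r + z\<^sup>2 * \<tau>) \<omega> - W r \<omega>)\<bar> < z" for \<tau>
      using z by (simp add: V_def abs_div_lt)
    show ?thesis
    proof
      assume L: "\<forall>\<tau>\<in>{0..t'}. \<bar>V \<tau> \<omega>\<bar> < 1"
      show "\<forall>t\<in>{0..S}. \<bar>y + (W (r + t) \<omega> - W r \<omega>)\<bar> < z"
      proof
        fix t assume t: "t \<in> {0..S}"
        have "t / z\<^sup>2 \<in> {0..t'}" using t z St by (auto simp: field_simps)
        with L a[of "t / z\<^sup>2"] z show "\<bar>y + (W (r + t) \<omega> - W r \<omega>)\<bar> < z" by simp
      qed
    next
      assume R: "\<forall>t\<in>{0..S}. \<bar>y + (W (r + t) \<omega> - W r \<omega>)\<bar> < z"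
      show "\<forall>\<tau>\<in>{0..t'}. \<bar>V \<tau> \<omega>\<bar> < 1"
      proof
        fix \<tau> assume \<tau>: "\<tau> \<in> {0..t'}"
        have "z\<^sup>2 * \<tau> \<in> {0..S}" using \<tau> z St by (auto intro: mult_left_mono)
        with R a[of \<tau>] show "\<bar>V \<tau> \<omega>\<bar> < 1" by simp
      qed
    qed
  qed
  have e3: "V t' \<omega> \<in> (\<lambda>v. z * v) -` A \<longleftrightarrow> y + (W (r + S) \<omega> - W r \<omega>) \<in> A"
    using z St by (simp add: V_def)
  have Q01: "Q 0 \<omega> 1 = W (r + S) \<omega> - W r \<omega>" "Q 0 \<omega> (Suc 0) = W (r + S) \<omega> - W r \<omega>" by (simp_all add: Q_def)
  show "(V t' \<omega> \<in> (\<lambda>v. z * v) -` A \<and> exit_time 1 V \<omega> > ereal t') \<longleftrightarrow> ((\<lambda>_. y), Y \<omega>) \<in> H z A"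
    unfolding e1 e2 e3 post_char[OF \<omega>] by (simp add: in_H Y_def Q01)
qed

lemma key:
  fixes \<nu> :: "real measure"
  assumes hyp: "\<forall>(M :: 'a measure) W x. brownian_motion_from M W x \<and> x \<in> {-1<..<1} \<longrightarrow>
           (\<forall>A\<in>sets borel. cond_law M W 1 t' A \<ge> c * measure \<nu> A)"
    and z: "z > 0" and St: "S = z\<^sup>2 * t'" and c: "c > 0" and \<nu>1: "measure \<nu> UNIV = 1"
    and y: "\<bar>y\<bar> < z" and A: "A \<in> sets borel"
  shows "g z A y \<ge> ennreal (c * measure \<nu> ((\<lambda>v. z * v) -` A)) * g z UNIV y" and "g z UNIV y > 0"
proof -
  define V where "V \<equiv> \<lambda>t \<omega>. (y + (W (r + z\<^sup>2 * t) \<omega> - W r \<omega>)) / z"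
  have bmV: "brownian_motion_from M V (y / z)"
    unfolding V_def by (rule shift_scale_bm[OF r_nonneg z])
  have yz: "y / z \<in> {-1<..<1}" using y z by (auto simp: field_simps abs_less_iff)
  have hV: "\<forall>A\<in>sets borel. cond_law M V 1 t' A \<ge> c * measure \<nu> A"
    using hyp bmV yz by blast
  have "(\<lambda>v. z * v) -` A \<inter> space borel \<in> sets borel" by (rule measurable_sets[OF _ A]) simp
  then have A': "(\<lambda>v. z * v) -` A \<in> sets borel" by simp
  define nA where "nA = {\<omega>'\<in>space M. ((\<lambda>_. y), Y \<omega>') \<in> H z A}"
  define nU where "nU = {\<omega>'\<in>space M. ((\<lambda>_. y), Y \<omega>') \<in> H z UNIV}"
  have eA: "{\<omega>\<in>space M. V t' \<omega> \<in> (\<lambda>v. z * v) -` A \<and> exit_time 1 V \<omega> > ereal t'} = nA"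
    unfolding nA_def V_def by (rule V_eq[OF z y St])
  have eU: "{\<omega>\<in>space M. exit_time 1 V \<omega> > ereal t'} = nU"
    using V_eq[OF z y St, of UNIV] unfolding nU_def V_def by simp
  have c1: "cond_law M V 1 t' ((\<lambda>v. z * v) -` A) = measure M nA / measure M nU"
    unfolding cond_law_def eA eU ..
  have c2: "cond_law M V 1 t' UNIV = measure M nU / measure M nU"
    unfolding cond_law_def using eU by simp
  from hV c2 c \<nu>1 have "measure M nU / measure M nU \<ge> c" by force
  with c have pos: "measure M nU > 0"
    by (metis div_by_0 measure_nonneg order_le_less not_less)
  have "nA \<subseteq> nU" unfolding nA_def nU_def by (auto simp: in_H)
  from hV A' c1 have "measure M nA / measure M nU \<ge> c * measure \<nu> ((\<lambda>v. z * v) -` A)" by force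
  then have ineq: "measure M nA \<ge> c * measure \<nu> ((\<lambda>v. z * v) -` A) * measure M nU"
    using pos by (simp add: le_divide_eq)
  have gA: "g z A y = ennreal (measure M nA)" unfolding g_def nA_def by (simp add: emeasure_eq_measure)
  have gU: "g z UNIV y = ennreal (measure M nU)" unfolding g_def nU_def by (simp add: emeasure_eq_measure)
  show "g z A y \<ge> ennreal (c * measure \<nu> ((\<lambda>v. z * v) -` A)) * g z UNIV y"
    unfolding gA gU using ineq c
    by (simp add: ennreal_mult'[symmetric] ennreal_leI)
  show "g z UNIV y > 0" unfolding gU using pos by simp
qed

end


context bm
begin

lemma pre_sets_bm:
  assumes r: "0 \<le> r"
  shows "{\<omega>\<in>space M. \<forall>t\<in>{0..r}. \<bar>W t \<omega>\<bar> < z} \<in> sets M"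
proof -
  interpret bm_split M W x0 r 1 by unfold_locales (use r in auto)
  have [measurable]: "(\<lambda>\<omega>. P N \<omega> k) \<in> borel_measurable M" for N k
    using measurable_compose[OF P_meas measurable_component_singleton[of k UNIV]] by simp
  have "{\<omega>\<in>space M. \<forall>t\<in>{0..r}. \<bar>W t \<omega>\<bar> < z} = {\<omega>\<in>space M. \<exists>m::nat. \<forall>N k. \<bar>x0 + P N \<omega> k\<bar> \<le> z - 1 / (real m + 1)}"
    using pre_char by blast
  also have "\<dots> \<in> sets M" by measurable
  finally show ?thesis .
qed

lemma pos_step:
  fixes \<nu> :: "real measure"
  assumes hyp: "\<forall>(M :: 'a measure) W x. brownian_motion_from M W x \<and> x \<in> {-1<..<1} \<longrightarrow>
           (\<forall>A\<in>sets borel. cond_law M W 1 t' A \<ge> c * measure \<nu> A)"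
    and z: "z > 0" and St: "S = z\<^sup>2 * t'" and Sp: "S > 0" and c: "c > 0" and \<nu>1: "measure \<nu> UNIV = 1"
    and x0: "\<bar>x0\<bar> < z" and r: "0 \<le> r"
    and pre_pos: "emeasure M {\<omega>\<in>space M. \<forall>t\<in>{0..r}. \<bar>W t \<omega>\<bar> < z} > 0"
  shows "emeasure M {\<omega>\<in>space M. \<forall>t\<in>{0..r+S}. \<bar>W t \<omega>\<bar> < z} > 0"
proof -
  interpret bm_split M W x0 r S by unfold_locales (use r Sp in auto)
  have [measurable]: "(\<lambda>\<omega>. P N \<omega> k) \<in> borel_measurable M" for N k
    using measurable_compose[OF P_meas measurable_component_singleton[of k UNIV]] by simp
  define pre where "pre = {\<omega>\<in>space M. \<forall>t\<in>{0..r}. \<bar>W t \<omega>\<bar> < z}"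
  have pre_eq: "pre = {\<omega>\<in>space M. \<exists>m::nat. \<forall>N k. \<bar>x0 + P N \<omega> k\<bar> \<le> z - 1 / (real m + 1)}"
    unfolding pre_def using pre_char by blast
  have pre_sets: "pre \<in> sets M" unfolding pre_eq by measurable
  have E: "{\<omega>\<in>space M. \<forall>t\<in>{0..r+S}. \<bar>W t \<omega>\<bar> < z} =
      {\<omega>\<in>space M. W (r+S) \<omega> \<in> UNIV \<and> exit_time z W \<omega> > ereal (r+S)}"
    using exit_char[OF _ _ x0] r Sp by auto
  note mk = markov[OF x0, of UNIV, simplified]
  show ?thesis
  proof (rule ccontr)
    assume "\<not> ?thesis"
    then have "emeasure M {\<omega>\<in>space M. \<forall>t\<in>{0..r+S}. \<bar>W t \<omega>\<bar> < z} = 0" by (simp add: not_less)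
    then have "(\<integral>\<^sup>+\<omega>. g z UNIV (X z \<omega>) \<partial>M) = 0" using E mk by simp
    then have "AE \<omega> in M. g z UNIV (X z \<omega>) = 0" using nn_integral_0_iff_AE[OF mk(2)] by simp
    moreover have "\<omega> \<in> pre \<Longrightarrow> g z UNIV (X z \<omega>) \<noteq> 0" for \<omega>
      using key(2)[OF hyp z St c \<nu>1 X_pre sets.top[of borel], of \<omega>] unfolding pre_def by auto
    ultimately have "AE \<omega> in M. \<omega> \<notin> pre" by (auto elim: AE_mp)
    then have "emeasure M pre = 0"
    proof -
      have "{\<omega>\<in>space M. \<not> \<omega> \<notin> pre} = pre" using pre_sets sets.sets_into_space by auto
      then show ?thesis using AE_iff_measurable[OF pre_sets, of "\<lambda>\<omega>. \<omega> \<notin> pre"] \<open>AE \<omega> in M. \<omega> \<notin> pre\<close> by simp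
    qed
    then show False using pre_pos unfolding pre_def by simp
  qed
qed

lemma pos_all:
  fixes \<nu> :: "real measure"
  assumes hyp: "\<forall>(M :: 'a measure) W x. brownian_motion_from M W x \<and> x \<in> {-1<..<1} \<longrightarrow>
           (\<forall>A\<in>sets borel. cond_law M W 1 t' A \<ge> c * measure \<nu> A)"
    and z: "z > 0" and St: "S = z\<^sup>2 * t'" and Sp: "S > 0" and c: "c > 0" and \<nu>1: "measure \<nu> UNIV = 1"
    and x0: "\<bar>x0\<bar> < z" and r: "0 \<le> r"
  shows "emeasure M {\<omega>\<in>space M. \<forall>t\<in>{0..r}. \<bar>W t \<omega>\<bar> < z} > 0"
proof -
  have k: "emeasure M {\<omega>\<in>space M. \<forall>t\<in>{0..real k * S}. \<bar>W t \<omega>\<bar> < z} > 0" for k :: nat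
  proof (induction k)
    case 0
    have "{\<omega>\<in>space M. \<forall>t\<in>{0..real 0 * S}. \<bar>W t \<omega>\<bar> < z} = space M"
      using W_0 x0 by auto
    then show ?case by (simp add: emeasure_space_1)
  next
    case (Suc k)
    have "real (Suc k) * S = real k * S + S" by (simp add: algebra_simps)
    then show ?case
      using pos_step[OF hyp z St Sp c \<nu>1 x0 _ Suc] Sp by simp
  qed
  obtain n :: nat where n: "r / S \<le> real n" using real_arch_simple by blast
  then have "r \<le> real n * S" using Sp by (simp add: divide_le_eq)
  then have "{\<omega>\<in>space M. \<forall>t\<in>{0..real n * S}. \<bar>W t \<omega>\<bar> < z} \<subseteq> {\<omega>\<in>space M. \<forall>t\<in>{0..r}. \<bar>W t \<omega>\<bar> < z}"
    by auto
  then have "emeasure M {\<omega>\<in>space M. \<forall>t\<in>{0..real n * S}. \<bar>W t \<omega>\<bar> < z} \<le> emeasure M {\<omega>\<in>space M. \<forall>t\<in>{0..r}. \<bar>W t \<omega>\<bar> < z}"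
    by (rule emeasure_mono) (rule pre_sets_bm[OF r])
  with k[of n] show ?thesis by simp
qed

end



theorem lemma2:
  fixes h_min h_max t0 c :: real and \<nu> :: "real measure"
  assumes "0 < h_min" "h_min \<le> h_max" "0 < t0" "0 < c"
    and "prob_space \<nu>" "sets \<nu> = sets borel" "emeasure \<nu> (UNIV - {-1<..<1}) = 0"
    and "\<forall>(M :: 'a measure) W x. brownian_motion_from M W x \<and> x \<in> {-1<..<1} \<longrightarrow>
           (\<forall>A\<in>sets borel. cond_law M W 1 (min (t0 / h_max\<^sup>2) t0) A \<ge> c * measure \<nu> A)"
  shows "\<forall>z\<in>{h_min..h_max}. \<forall>(M :: 'a measure) W x u.
           brownian_motion_from M W x \<and> x \<in> {-z<..<z} \<and> u \<ge> t0 \<longrightarrow>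
           (\<forall>A\<in>sets borel. cond_law M W z u A \<ge> c * measure (distr \<nu> borel (\<lambda>y. z * y)) A)"
proof (intro ballI allI impI)
  fix z and M :: "'a measure" and W x u and A :: "real set"
  assume zI: "z \<in> {h_min..h_max}"
    and H: "brownian_motion_from M W x \<and> x \<in> {-z<..<z} \<and> u \<ge> t0"
    and A: "A \<in> sets borel"
  define t' where "t' = min (t0 / h_max\<^sup>2) t0"
  define S where "S = z\<^sup>2 * t'"
  define r where "r = u - S"
  have z: "z > 0" using zI assms(1) by auto
  have hmax: "h_max > 0" using assms(1,2) by auto
  have t'p: "t' > 0" unfolding t'_def using assms(3) hmax by auto
  have Sp: "S > 0" unfolding S_def using z t'p by simp
  have "S \<le> z\<^sup>2 * (t0 / h_max\<^sup>2)" unfolding S_def t'_def by (intro mult_left_mono) auto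
  also have "\<dots> \<le> h_max\<^sup>2 * (t0 / h_max\<^sup>2)"
    using zI z assms(3) by (intro mult_right_mono power_mono) auto
  also have "\<dots> = t0" using hmax by simp
  finally have r: "0 \<le> r" unfolding r_def using H by simp
  have u: "u = r + S" unfolding r_def by simp
  have bmW: "brownian_motion_from M W x" and x: "\<bar>x\<bar> < z" using H by auto
  have hyp: "\<forall>(M :: 'a measure) W x. brownian_motion_from M W x \<and> x \<in> {-1<..<1} \<longrightarrow>
           (\<forall>A\<in>sets borel. cond_law M W 1 t' A \<ge> c * measure \<nu> A)"
    using assms(8) unfolding t'_def .
  interpret \<nu>: prob_space \<nu> by (rule assms(5))
  have sp\<nu>: "space \<nu> = UNIV" using sets_eq_imp_space_eq[OF assms(6)] by simp
  have \<nu>1: "measure \<nu> UNIV = 1" using \<nu>.prob_space sp\<nu> by simp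
  interpret bm M W x by (rule bm.intro[OF bmW])
  interpret bm_split M W x r S by unfold_locales (use r Sp in auto)
  have St: "S = z\<^sup>2 * t'" by (simp add: S_def)
  define cn where "cn = c * measure \<nu> ((\<lambda>v. z * v) -` A)"
  have cn: "cn \<ge> 0" unfolding cn_def using assms(4) by simp
  have dist: "measure (distr \<nu> borel (\<lambda>y. z * y)) A = measure \<nu> ((\<lambda>v. z * v) -` A)"
  proof -
    have "(\<lambda>y. z * y) \<in> measurable \<nu> borel"
      unfolding measurable_cong_sets[OF assms(6) refl] by simp
    then show ?thesis by (subst measure_distr[OF _ A]) (auto simp: sp\<nu>)
  qed
  define EA where "EA = {\<omega>\<in>space M. W (r+S) \<omega> \<in> A \<and> exit_time z W \<omega> > ereal (r+S)}"
  define EU where "EU = {\<omega>\<in>space M. W (r+S) \<omega> \<in> UNIV \<and> exit_time z W \<omega> > ereal (r+S)}"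
  note mA = markov[OF x A]
  have U: "UNIV \<in> sets (borel :: real measure)" by simp
  note mU = markov[OF x U]
  have pw: "g z A (X z \<omega>) \<ge> ennreal cn * g z UNIV (X z \<omega>)" if \<omega>: "\<omega> \<in> space M" for \<omega>
  proof (cases "X z \<omega> = z")
    case True then show ?thesis using g_z_zero[OF z] by simp
  next
    case False
    then have "\<bar>X z \<omega>\<bar> < z" using X_range[OF \<omega>] by auto
    from key(1)[OF hyp z St assms(4) \<nu>1 this A] show ?thesis unfolding cn_def .
  qed
  have "emeasure M EA = (\<integral>\<^sup>+\<omega>. g z A (X z \<omega>) \<partial>M)" unfolding EA_def by (rule mA(1))
  also have "\<dots> \<ge> (\<integral>\<^sup>+\<omega>. ennreal cn * g z UNIV (X z \<omega>) \<partial>M)"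
    by (intro nn_integral_mono pw)
  also have "(\<integral>\<^sup>+\<omega>. ennreal cn * g z UNIV (X z \<omega>) \<partial>M) = ennreal cn * (\<integral>\<^sup>+\<omega>. g z UNIV (X z \<omega>) \<partial>M)"
    by (rule nn_integral_cmult[OF mU(2)])
  also have "(\<integral>\<^sup>+\<omega>. g z UNIV (X z \<omega>) \<partial>M) = emeasure M EU" unfolding EU_def by (rule mU(1)[symmetric])
  finally have ineq: "ennreal cn * emeasure M EU \<le> emeasure M EA" .
  have EAs: "EA \<in> sets M" unfolding EA_def E_eq[OF x] using H_sets[OF A] by measurable
  have EUs: "EU \<in> sets M" unfolding EU_def E_eq[OF x] using H_sets[OF U] by measurable
  have "ennreal (cn * measure M EU) \<le> ennreal (measure M EA)"
    using ineq cn by (simp add: emeasure_eq_measure ennreal_mult)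
  then have ineq2: "cn * measure M EU \<le> measure M EA" by (simp add: ennreal_le_iff)
  have "EU = {\<omega>\<in>space M. \<forall>t\<in>{0..r+S}. \<bar>W t \<omega>\<bar> < z}"
    unfolding EU_def using exit_char[OF _ _ x] r Sp by auto
  then have "emeasure M EU > 0"
    using pos_step[OF hyp z St Sp assms(4) \<nu>1 x r pos_all[OF hyp z St Sp assms(4) \<nu>1 x r]] by simp
  then have posU: "measure M EU > 0" by (simp add: emeasure_eq_measure)
  have "cond_law M W z u A = measure M EA / measure M EU"
    unfolding cond_law_def EA_def EU_def u by simp
  also have "\<dots> \<ge> cn" using ineq2 posU by (simp add: le_divide_eq)
  finally show "cond_law M W z u A \<ge> c * measure (distr \<nu> borel (\<lambda>y. z * y)) A"
    unfolding dist cn_def .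
qed


end
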